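(* Let $k$ be a field of characteristic $p>2$ ($p$ prime). Let $m\ge1$ and $\alpha_1,\ldots,\alpha_{2m}\in k$. Then $$w_m(x_1+\alpha_1,x_2+\alpha_2,\ldots,x_{2m}+\alpha_{2m})\equiv w_m\pmod{S^2+T^{(3)}}.$$
   Context: $X=\{x_i\mid i\ge0\}$ countably infinite; $k_1\langle X\rangle$ the free unitary associative $k$-algebra on $X$. $[a,b]=ab-ba$, $[a,b,c]=[[a,b],c]$. A $T$-space is a subspace invariant under all endomorphisms of $k_1\langle X\rangle$, a $T$-ideal is a $T$-space that is an ideal. $T^{(3)}$ is the $T$-ideal generated by $[x_1,x_2,x_3]$, $S^2$ the $T$-space generated by $[x_1,x_2]$. $\kappa(u,v)=[u,v]u^{p-1}v^{p-1}$, $w_m=\prod_{r=1}^m\kappa(x_{2r-1},x_{2r})$, and $w_m(u_1,\ldots,u_{2m})$ is the image of $w_m$ under $x_j\mapsto u_j$. *)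

theory Defs
  imports Main "HOL-Computational_Algebra.Primes"
begin

text \<open>The free unitary associative k-algebra k_1<X> on X = {x_i | i >= 0}, modelled as
  finitely supported functions from words (lists of variable indices) to coefficients.
  The word [i1,...,in] stands for the monomial x_i1 ... x_in.\<close>

type_synonym 'k fa = "nat list \<Rightarrow> 'k"

definition FA :: "'k::field fa set" where
  "FA = {f. finite {w. f w \<noteq> 0}}"

definition fa_zero :: "'k::field fa" where
  "fa_zero = (\<lambda>w. 0)"

definition fa_one :: "'k::field fa" where
  "fa_one = (\<lambda>w. if w = [] then 1 else 0)"

definition fa_var :: "nat \<Rightarrow> 'k::field fa" where
  "fa_var i = (\<lambda>w. if w = [i] then 1 else 0)"

definition fa_add :: "'k::field fa \<Rightarrow> 'k fa \<Rightarrow> 'k fa" where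
  "fa_add f g = (\<lambda>w. f w + g w)"

definition fa_sub :: "'k::field fa \<Rightarrow> 'k fa \<Rightarrow> 'k fa" where
  "fa_sub f g = (\<lambda>w. f w - g w)"

definition fa_smul :: "'k::field \<Rightarrow> 'k fa \<Rightarrow> 'k fa" where
  "fa_smul c f = (\<lambda>w. c * f w)"

definition fa_mult :: "'k::field fa \<Rightarrow> 'k fa \<Rightarrow> 'k fa" where
  "fa_mult f g = (\<lambda>w. \<Sum>i\<le>length w. f (take i w) * g (drop i w))"

fun fa_pow :: "'k::field fa \<Rightarrow> nat \<Rightarrow> 'k fa" where
  "fa_pow f 0 = fa_one"
| "fa_pow f (Suc n) = fa_mult f (fa_pow f n)"

fun fa_prod_list :: "'k::field fa list \<Rightarrow> 'k fa" where
  "fa_prod_list [] = fa_one"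
| "fa_prod_list (f # fs) = fa_mult f (fa_prod_list fs)"

definition fa_comm :: "'k::field fa \<Rightarrow> 'k fa \<Rightarrow> 'k fa" where
  "fa_comm a b = fa_sub (fa_mult a b) (fa_mult b a)"

definition fa_endo :: "('k::field fa \<Rightarrow> 'k fa) \<Rightarrow> bool" where
  "fa_endo h \<longleftrightarrow> (\<forall>f\<in>FA. h f \<in> FA)
     \<and> (\<forall>f\<in>FA. \<forall>g\<in>FA. h (fa_add f g) = fa_add (h f) (h g))
     \<and> (\<forall>c. \<forall>f\<in>FA. h (fa_smul c f) = fa_smul c (h f))
     \<and> (\<forall>f\<in>FA. \<forall>g\<in>FA. h (fa_mult f g) = fa_mult (h f) (h g))
     \<and> h fa_one = fa_one"

definition fa_subspace :: "'k::field fa set \<Rightarrow> bool" where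
  "fa_subspace V \<longleftrightarrow> V \<subseteq> FA \<and> fa_zero \<in> V
     \<and> (\<forall>f\<in>V. \<forall>g\<in>V. fa_add f g \<in> V) \<and> (\<forall>c. \<forall>f\<in>V. fa_smul c f \<in> V)"

definition T_space :: "'k::field fa set \<Rightarrow> bool" where
  "T_space V \<longleftrightarrow> fa_subspace V \<and> (\<forall>h. fa_endo h \<longrightarrow> h ` V \<subseteq> V)"

definition T_ideal :: "'k::field fa set \<Rightarrow> bool" where
  "T_ideal V \<longleftrightarrow> T_space V
     \<and> (\<forall>f\<in>V. \<forall>g\<in>FA. fa_mult f g \<in> V \<and> fa_mult g f \<in> V)"

definition T_space_gen :: "'k::field fa set \<Rightarrow> 'k fa set" where
  "T_space_gen S = \<Inter>{V. T_space V \<and> S \<subseteq> V}"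

definition T_ideal_gen :: "'k::field fa set \<Rightarrow> 'k fa set" where
  "T_ideal_gen S = \<Inter>{V. T_ideal V \<and> S \<subseteq> V}"

definition S2 :: "'k::field fa set" where
  "S2 = T_space_gen {fa_comm (fa_var 1) (fa_var 2)}"

definition T3 :: "'k::field fa set" where
  "T3 = T_ideal_gen {fa_comm (fa_comm (fa_var 1) (fa_var 2)) (fa_var 3)}"

definition set_sum :: "'k::field fa set \<Rightarrow> 'k fa set \<Rightarrow> 'k fa set" where
  "set_sum A B = {fa_add a b | a b. a \<in> A \<and> b \<in> B}"

definition kappa :: "'k::field fa \<Rightarrow> 'k fa \<Rightarrow> 'k fa" where
  "kappa u v = fa_mult (fa_comm u v)
     (fa_mult (fa_pow u (CHAR('k) - 1)) (fa_pow v (CHAR('k) - 1)))"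

definition w_gen :: "nat \<Rightarrow> (nat \<Rightarrow> 'k::field fa) \<Rightarrow> 'k fa" where
  "w_gen m u = fa_prod_list (map (\<lambda>r. kappa (u (2*r - 1)) (u (2*r))) [1..<m+1])"

end

theory Submission
  imports Defs
begin

definition splits :: "nat list \<Rightarrow> (nat list \<times> nat list) set" where
  "splits w = {(u,v). u @ v = w}"

lemma splits_eq: "splits w = (\<lambda>i. (take i w, drop i w)) ` {..length w}"
proof -
  have "(u,v) \<in> (\<lambda>i. (take i w, drop i w)) ` {..length w}" if "u @ v = w" for u v
    using that by (intro image_eqI[where x="length u"]) auto
  then show ?thesis unfolding splits_def by auto
qed

lemma finite_splits[simp]: "finite (splits w)"
  by (simp add: splits_eq)

lemma fa_mult_splits: "fa_mult f g w = (\<Sum>(u,v)\<in>splits w. f u * g v)"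
proof -
  have inj: "inj_on (\<lambda>i. (take i w, drop i w)) {..length w}"
    by (rule inj_onI) (metis (no_types, lifting) Pair_inject atMost_iff length_take min.absorb2)
  show ?thesis unfolding fa_mult_def splits_eq
    by (simp add: sum.reindex[OF inj])
qed

lemma FA_add: "f \<in> FA \<Longrightarrow> g \<in> FA \<Longrightarrow> fa_add f g \<in> FA"
  unfolding FA_def fa_add_def
  by (simp, rule finite_subset[of _ "{w. f w \<noteq> 0} \<union> {w. g w \<noteq> 0}"]) auto

lemma FA_sub: "f \<in> FA \<Longrightarrow> g \<in> FA \<Longrightarrow> fa_sub f g \<in> FA"
  unfolding FA_def fa_sub_def
  by (simp, rule finite_subset[of _ "{w. f w \<noteq> 0} \<union> {w. g w \<noteq> 0}"]) auto

lemma FA_smul: "f \<in> FA \<Longrightarrow> fa_smul c f \<in> FA"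
  unfolding FA_def fa_smul_def by (auto elim: rev_finite_subset)

lemma FA_zero: "fa_zero \<in> FA" unfolding FA_def fa_zero_def by simp
lemma FA_one: "fa_one \<in> FA" unfolding FA_def fa_one_def by simp
lemma FA_var: "fa_var i \<in> FA" unfolding FA_def fa_var_def by simp

lemma FA_mult: assumes "f \<in> FA" "g \<in> FA" shows "fa_mult f g \<in> FA"
proof -
  let ?A = "{w. f w \<noteq> 0}" and ?B = "{w. g w \<noteq> 0}"
  have fin: "finite ((\<lambda>(u,v). u @ v) ` (?A \<times> ?B))" using assms unfolding FA_def by auto
  have "{w. fa_mult f g w \<noteq> 0} \<subseteq> (\<lambda>(u,v). u @ v) ` (?A \<times> ?B)"
  proof
    fix w assume "w \<in> {w. fa_mult f g w \<noteq> 0}"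
    then have "(\<Sum>(u,v)\<in>splits w. f u * g v) \<noteq> 0" by (simp add: fa_mult_splits)
    then obtain u v where "(u,v) \<in> splits w" "f u * g v \<noteq> 0"
      by (metis (mono_tags, lifting) case_prod_conv sum.neutral prod.collapse)
    then show "w \<in> (\<lambda>(u,v). u @ v) ` (?A \<times> ?B)" unfolding splits_def by force
  qed
  then show ?thesis unfolding FA_def using fin finite_subset by blast
qed

lemma sum_Sig: "(\<Sum>p\<in>splits w. \<Sum>q\<in>splits (G p). F p q) = (\<Sum>x\<in>Sigma (splits w) (\<lambda>p. splits (G p)). F (fst x) (snd x))"
  by (subst sum.Sigma) (auto simp: case_prod_unfold)

lemma fa_mult_assoc: "fa_mult (fa_mult f g) h = fa_mult f (fa_mult g h)"
proof
  fix w
  have "fa_mult (fa_mult f g) h w = (\<Sum>(s,t)\<in>splits w. (\<Sum>(u,v)\<in>splits s. f u * g v) * h t)"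
    by (simp add: fa_mult_splits)
  also have "\<dots> = (\<Sum>(s,t)\<in>splits w. \<Sum>(u,v)\<in>splits s. f u * g v * h t)"
    by (simp add: sum_distrib_right case_prod_unfold)
  also have "\<dots> = (\<Sum>x\<in>Sigma (splits w) (\<lambda>p. splits (fst p)). f (fst (snd x)) * g (snd (snd x)) * h (snd (fst x)))"
    by (simp add: case_prod_unfold sum_Sig)
  also have "\<dots> = (\<Sum>x\<in>Sigma (splits w) (\<lambda>p. splits (snd p)). f (fst (fst x)) * (g (fst (snd x)) * h (snd (snd x))))"
    apply (rule sum.reindex_bij_witness[where i="\<lambda>((u,r),(v,t)). ((u@v,t),(u,v))"
                                          and j="\<lambda>((s,t),(u,v)). ((u, v@t),(v,t))"])
    by (auto simp: splits_def mult.assoc)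
  also have "\<dots> = (\<Sum>(u,r)\<in>splits w. \<Sum>(v,t)\<in>splits r. f u * (g v * h t))"
    by (simp add: case_prod_unfold sum_Sig)
  also have "\<dots> = fa_mult f (fa_mult g h) w"
    by (simp add: fa_mult_splits sum_distrib_left case_prod_unfold)
  finally show "fa_mult (fa_mult f g) h w = fa_mult f (fa_mult g h) w" .
qed

lemma fa_mult_add_left: "fa_mult (fa_add f g) h = fa_add (fa_mult f h) (fa_mult g h)"
  by (rule ext) (simp add: fa_mult_def fa_add_def distrib_right sum.distrib)

lemma fa_mult_add_right: "fa_mult h (fa_add f g) = fa_add (fa_mult h f) (fa_mult h g)"
  by (rule ext) (simp add: fa_mult_def fa_add_def distrib_left sum.distrib)

lemma fa_mult_smul_left: "fa_mult (fa_smul c f) h = fa_smul c (fa_mult f h)"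
  by (rule ext) (simp add: fa_mult_def fa_smul_def sum_distrib_left mult.assoc)

lemma fa_mult_smul_right: "fa_mult h (fa_smul c f) = fa_smul c (fa_mult h f)"
  by (rule ext) (simp add: fa_mult_def fa_smul_def sum_distrib_left mult.left_commute)

lemma fa_mult_one_left: "fa_mult fa_one f = f"
proof
  fix w
  have "fa_mult fa_one f w = (\<Sum>p\<in>splits w. if p = ([],w) then f w else 0)"
    unfolding fa_mult_splits fa_one_def
    by (rule sum.cong) (auto simp: splits_def split: if_splits)
  also have "\<dots> = f w" by (simp only: sum.delta[OF finite_splits]) (simp add: splits_def)
  finally show "fa_mult fa_one f w = f w" .
qed

lemma fa_mult_one_right: "fa_mult f fa_one = f"
proof
  fix w
  have "fa_mult f fa_one w = (\<Sum>p\<in>splits w. if p = (w,[]) then f w else 0)"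
    unfolding fa_mult_splits fa_one_def
    by (rule sum.cong) (auto simp: splits_def split: if_splits)
  also have "\<dots> = f w" by (simp only: sum.delta[OF finite_splits]) (simp add: splits_def)
  finally show "fa_mult f fa_one w = f w" .
qed


typedef (overloaded) ('k::field) fr = "FA :: 'k fa set"
  morphisms Rep_fr Abs_fr
  using FA_zero by blast

setup_lifting type_definition_fr

instantiation fr :: (field) ring_1
begin
lift_definition zero_fr :: "'a fr" is fa_zero by (rule FA_zero)
lift_definition one_fr :: "'a fr" is fa_one by (rule FA_one)
lift_definition plus_fr :: "'a fr \<Rightarrow> 'a fr \<Rightarrow> 'a fr" is fa_add by (rule FA_add)
lift_definition minus_fr :: "'a fr \<Rightarrow> 'a fr \<Rightarrow> 'a fr" is fa_sub by (rule FA_sub)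
lift_definition uminus_fr :: "'a fr \<Rightarrow> 'a fr" is "fa_smul (-1)" by (rule FA_smul)
lift_definition times_fr :: "'a fr \<Rightarrow> 'a fr \<Rightarrow> 'a fr" is fa_mult by (rule FA_mult)
instance
proof
  fix a b c :: "'a fr"
  show "a + b + c = a + (b + c)" by transfer (simp add: fa_add_def add.assoc)
  show "a + b = b + a" by transfer (simp add: fa_add_def add.commute)
  show "0 + a = a" by transfer (simp add: fa_add_def fa_zero_def)
  show "- a + a = 0" by transfer (simp add: fa_add_def fa_zero_def fa_smul_def)
  show "a - b = a + - b" by transfer (simp add: fa_add_def fa_sub_def fa_smul_def)
  show "a * b * c = a * (b * c)" by transfer (rule fa_mult_assoc)
  show "1 * a = a" by transfer (rule fa_mult_one_left)
  show "a * 1 = a" by transfer (rule fa_mult_one_right)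
  show "(a + b) * c = a * c + b * c" by transfer (rule fa_mult_add_left)
  show "a * (b + c) = a * b + a * c" by transfer (rule fa_mult_add_right)
  show "(0::'a fr) \<noteq> 1" by transfer (simp add: fa_zero_def fa_one_def fun_eq_iff)
qed
end

lift_definition sc :: "'k::field \<Rightarrow> 'k fr \<Rightarrow> 'k fr" is fa_smul by (rule FA_smul)

definition const :: "'k::field \<Rightarrow> 'k fr" where "const c = sc c 1"

lemma sc_mult_left: "sc c a * b = sc c (a * b)"
  by transfer (rule fa_mult_smul_left)
lemma sc_mult_right: "a * sc c b = sc c (a * b)"
  by transfer (rule fa_mult_smul_right)
lemma const_mult: "const c * a = sc c a"
  by (simp add: const_def sc_mult_left)
lemma mult_const: "a * const c = sc c a"
  by (simp add: const_def sc_mult_right)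
lemma const_central: "const c * a = a * const c"
  by (simp add: const_mult mult_const)
lemma sc_sc: "sc c (sc d a) = sc (c * d) a"
  by transfer (simp add: fa_smul_def mult.assoc)
lemma const_times: "const (c * d) = const c * const d"
  by (simp add: const_def sc_mult_left sc_sc)
lemma sc_add: "sc c (a + b) = sc c a + sc c b"
  by transfer (simp add: fa_smul_def fa_add_def distrib_left)
lemma sc_add2: "sc (c + d) a = sc c a + sc d a"
  by transfer (simp add: fa_smul_def fa_add_def distrib_right)
lemma sc_one: "sc 1 a = a" by transfer (simp add: fa_smul_def)
lemma sc_zero: "sc 0 a = 0" by transfer (simp add: fa_smul_def fa_zero_def)
lemma sc_minus1: "sc (-1) a = - a" by transfer simp
lemma const_add: "const (c + d) = const c + const d"
  by (simp add: const_def sc_add2)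
lemma const_one: "const 1 = 1" by (simp add: const_def sc_one)
lemma const_zero: "const 0 = 0" by (simp add: const_def sc_zero)
lemma const_of_nat: "const (of_nat n) = (of_nat n :: 'k::field fr)"
  by (induction n) (simp_all add: const_add const_one const_zero)

lemma Rep_sc: "Rep_fr (sc c a) = fa_smul c (Rep_fr a)" by transfer simp
lemma Rep_plus: "Rep_fr (a + b) = fa_add (Rep_fr a) (Rep_fr b)" by transfer simp
lemma Rep_minus: "Rep_fr (a - b) = fa_sub (Rep_fr a) (Rep_fr b)" by transfer simp
lemma Rep_times: "Rep_fr (a * b) = fa_mult (Rep_fr a) (Rep_fr b)" by transfer simp
lemma Rep_one: "Rep_fr 1 = fa_one" by transfer simp
lemma Rep_power: "Rep_fr (a ^ n) = fa_pow (Rep_fr a) n"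
  by (induction n) (simp_all add: Rep_one Rep_times)
lemma Rep_prod_list: "Rep_fr (prod_list xs) = fa_prod_list (map Rep_fr xs)"
  by (induction xs) (simp_all add: Rep_one Rep_times)


definition supp :: "'k::field fr \<Rightarrow> nat list set" where
  "supp x = {w. Rep_fr x w \<noteq> 0}"

lemma finite_supp[simp]: "finite (supp x)"
  using Rep_fr[of x] unfolding supp_def FA_def by simp

definition mon :: "(nat \<Rightarrow> 'k::field fr) \<Rightarrow> nat list \<Rightarrow> 'k fr" where
  "mon \<sigma> w = prod_list (map \<sigma> w)"

definition ev :: "(nat \<Rightarrow> 'k::field fr) \<Rightarrow> 'k fr \<Rightarrow> 'k fr" where
  "ev \<sigma> x = (\<Sum>w\<in>supp x. const (Rep_fr x w) * mon \<sigma> w)"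

lemma ev_superset: assumes "finite A" "supp x \<subseteq> A"
  shows "ev \<sigma> x = (\<Sum>w\<in>A. const (Rep_fr x w) * mon \<sigma> w)"
  unfolding ev_def using assms
  by (intro sum.mono_neutral_left) (auto simp: supp_def const_zero)

lemma const_sum: "const (sum f S) = (\<Sum>i\<in>S. const (f i))"
  by (induction S rule: infinite_finite_induct) (simp_all add: const_zero const_add)

lemma ev_add: "ev \<sigma> (x + y) = ev \<sigma> x + ev \<sigma> y"
proof -
  let ?A = "supp x \<union> supp y"
  have s: "supp (x+y) \<subseteq> ?A" by (auto simp: supp_def Rep_plus fa_add_def)
  show ?thesis
    by (simp add: ev_superset[OF _ s] ev_superset[of ?A x] ev_superset[of ?A y]
        Rep_plus fa_add_def const_add distrib_right sum.distrib)
qed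

lemma ev_sc: "ev \<sigma> (sc c x) = const c * ev \<sigma> x"
proof -
  have s: "supp (sc c x) \<subseteq> supp x" by (auto simp: supp_def Rep_sc fa_smul_def)
  show ?thesis unfolding ev_superset[OF finite_supp s]
    by (simp add: ev_def Rep_sc fa_smul_def const_times sum_distrib_left mult.assoc)
qed

lemma ev_one: "ev \<sigma> 1 = 1"
proof -
  have "supp (1::'a::field fr) = {[]}" by (auto simp: supp_def Rep_one fa_one_def)
  then show ?thesis by (simp add: ev_def Rep_one fa_one_def const_one mon_def)
qed

lemma ev_var: "ev \<sigma> (Abs_fr (fa_var i)) = \<sigma> i"
proof -
  have R: "Rep_fr (Abs_fr (fa_var i) :: 'a::field fr) = fa_var i"
    using FA_var Abs_fr_inverse by blast
  have "supp (Abs_fr (fa_var i) :: 'a fr) = {[i]}" unfolding supp_def R by (auto simp: fa_var_def)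
  then show ?thesis unfolding ev_def R by (simp add: fa_var_def const_one mon_def)
qed

lemma mon_append: "mon \<sigma> (u @ v) = mon \<sigma> u * mon \<sigma> v"
  by (simp add: mon_def)

lemma const_helper: "const a * m * (const b * n) = const (a*b) * (m * n)"
  by (simp add: const_mult sc_mult_left sc_mult_right sc_sc mult.commute)

lemma ev_mult: "ev \<sigma> (x * y) = ev \<sigma> x * ev \<sigma> y"
proof -
  let ?X = "Rep_fr x" and ?Y = "Rep_fr y" and ?A = "supp x" and ?B = "supp y"
  let ?g = "\<lambda>p::nat list \<times> nat list. fst p @ snd p"
  let ?C = "?g ` (?A \<times> ?B)"
  let ?F = "\<lambda>p. const (?X (fst p) * ?Y (snd p)) * mon \<sigma> (?g p)"
  have finC: "finite ?C" by simp
  have s: "supp (x*y) \<subseteq> ?C"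
  proof
    fix w assume "w \<in> supp (x*y)"
    then have "(\<Sum>(u,v)\<in>splits w. ?X u * ?Y v) \<noteq> 0" by (simp add: supp_def Rep_times fa_mult_splits)
    then obtain u v where "(u,v) \<in> splits w" "?X u * ?Y v \<noteq> 0"
      by (metis (mono_tags, lifting) case_prod_conv sum.neutral prod.collapse)
    then show "w \<in> ?C" unfolding splits_def supp_def by force
  qed
  have "ev \<sigma> (x*y) = (\<Sum>w\<in>?C. const (\<Sum>(u,v)\<in>splits w. ?X u * ?Y v) * mon \<sigma> w)"
    by (simp add: ev_superset[OF finC s] Rep_times fa_mult_splits)
  also have "\<dots> = (\<Sum>w\<in>?C. \<Sum>p\<in>splits w. const (?X (fst p) * ?Y (snd p)) * mon \<sigma> w)"
    by (simp add: const_sum sum_distrib_right case_prod_unfold)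
  also have "\<dots> = (\<Sum>w\<in>?C. \<Sum>p\<in>{p\<in>?A \<times> ?B. ?g p = w}. ?F p)"
  proof (rule sum.cong[OF refl])
    fix w
    have "(\<Sum>p\<in>splits w. const (?X (fst p) * ?Y (snd p)) * mon \<sigma> w)
        = (\<Sum>p\<in>{p\<in>?A \<times> ?B. ?g p = w}. const (?X (fst p) * ?Y (snd p)) * mon \<sigma> w)"
      by (rule sum.mono_neutral_right[OF finite_splits]) (auto simp: splits_def supp_def const_zero)
    also have "\<dots> = (\<Sum>p\<in>{p\<in>?A \<times> ?B. ?g p = w}. ?F p)"
      by (rule sum.cong) auto
    finally show "(\<Sum>p\<in>splits w. const (?X (fst p) * ?Y (snd p)) * mon \<sigma> w)
        = (\<Sum>p\<in>{p\<in>?A \<times> ?B. ?g p = w}. ?F p)" .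
  qed
  also have "\<dots> = (\<Sum>p\<in>?A \<times> ?B. ?F p)"
    by (rule sum.group) auto
  also have "\<dots> = (\<Sum>u\<in>?A. \<Sum>v\<in>?B. (const (?X u) * mon \<sigma> u) * (const (?Y v) * mon \<sigma> v))"
    by (simp add: sum.cartesian_product mon_append const_helper case_prod_unfold)
  also have "\<dots> = ev \<sigma> x * ev \<sigma> y"
    by (simp add: ev_def sum_distrib_left sum_distrib_right sum.swap[of _ "supp y"])
  finally show ?thesis .
qed

definition hsub :: "(nat \<Rightarrow> 'k::field fr) \<Rightarrow> 'k fa \<Rightarrow> 'k fa" where
  "hsub \<sigma> f = Rep_fr (ev \<sigma> (Abs_fr f))"

lemma Abs_add: "f \<in> FA \<Longrightarrow> g \<in> FA \<Longrightarrow> Abs_fr (fa_add f g) = Abs_fr f + Abs_fr g"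
  by (metis Abs_fr_inverse Rep_fr_inverse Rep_plus)
lemma Abs_mult: "f \<in> FA \<Longrightarrow> g \<in> FA \<Longrightarrow> Abs_fr (fa_mult f g) = Abs_fr f * Abs_fr g"
  by (metis Abs_fr_inverse Rep_fr_inverse Rep_times)
lemma Abs_smul: "f \<in> FA \<Longrightarrow> Abs_fr (fa_smul c f) = sc c (Abs_fr f)"
  by (metis Abs_fr_inverse Rep_fr_inverse Rep_sc)

lemma hsub_endo: "fa_endo (hsub \<sigma>)"
  unfolding fa_endo_def hsub_def
  apply (intro conjI ballI allI)
      apply (rule Rep_fr)
     apply (simp add: Abs_add ev_add Rep_plus)
    apply (simp add: Abs_smul ev_sc Rep_sc const_mult)
   apply (simp add: Abs_mult ev_mult Rep_times)
  apply (metis Rep_one Rep_fr_inverse ev_one)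
  done

lemma hsub_var: "hsub \<sigma> (fa_var i) = Rep_fr (\<sigma> i)"
  by (simp add: hsub_def ev_var)


definition Sr :: "'k::field fr set" where "Sr = {x. Rep_fr x \<in> S2}"
definition Ir :: "'k::field fr set" where "Ir = {x. Rep_fr x \<in> T3}"

lemma ev_minus: "ev \<sigma> (x - y) = ev \<sigma> x - ev \<sigma> y"
proof -
  have "ev \<sigma> (x - y) = ev \<sigma> (x + sc (-1) y)" by (simp add: sc_minus1)
  also have "\<dots> = ev \<sigma> x + const (-1) * ev \<sigma> y" by (simp only: ev_add ev_sc)
  finally show ?thesis by (simp add: const_mult sc_minus1)
qed

lemma Rep_Abs_var: "Rep_fr (Abs_fr (fa_var i) :: 'k::field fr) = fa_var i"
  using FA_var Abs_fr_inverse by blast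

definition X :: "nat \<Rightarrow> 'k::field fr" where "X i = Abs_fr (fa_var i)"

lemma fa_comm_Rep: "fa_comm (Rep_fr a) (Rep_fr b) = Rep_fr (a * b - b * a)"
  by (simp add: fa_comm_def Rep_minus Rep_times)

lemma hsub_Rep: "hsub \<sigma> (Rep_fr z) = Rep_fr (ev \<sigma> z)"
  by (simp add: hsub_def Rep_fr_inverse)

lemma var_X: "fa_var i = Rep_fr (X i)"
  by (simp add: X_def Rep_Abs_var)

lemma ev_X: "ev \<sigma> (X i) = \<sigma> i" by (simp add: X_def ev_var)

lemma S_comm: "a * b - b * a \<in> Sr"
proof -
  let ?\<sigma> = "\<lambda>i. if i = 1 then a else b"
  have "Rep_fr (a * b - b * a) \<in> V" if V: "T_space V" "fa_comm (fa_var 1) (fa_var 2) \<in> V" for V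
  proof -
    have "hsub ?\<sigma> (fa_comm (fa_var 1) (fa_var 2)) \<in> V"
      using V hsub_endo unfolding T_space_def by blast
    moreover have "hsub ?\<sigma> (fa_comm (fa_var 1) (fa_var 2)) = Rep_fr (a * b - b * a)"
      by (simp add: var_X fa_comm_Rep hsub_Rep ev_minus ev_mult ev_X)
    ultimately show ?thesis by simp
  qed
  then show ?thesis unfolding Sr_def S2_def T_space_gen_def by auto
qed

lemma I_comm3: "(a * b - b * a) * c - c * (a * b - b * a) \<in> Ir"
proof -
  let ?\<sigma> = "\<lambda>i. if i = 1 then a else if i = 2 then b else c"
  let ?e = "fa_comm (fa_comm (fa_var 1) (fa_var 2)) (fa_var 3)"
  have "Rep_fr ((a * b - b * a) * c - c * (a * b - b * a)) \<in> V" if V: "T_ideal V" "?e \<in> V" for V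
  proof -
    have "hsub ?\<sigma> ?e \<in> V"
      using V hsub_endo unfolding T_ideal_def T_space_def by blast
    moreover have "hsub ?\<sigma> ?e = Rep_fr ((a * b - b * a) * c - c * (a * b - b * a))"
      by (simp add: var_X fa_comm_Rep hsub_Rep ev_minus ev_mult ev_X)
    ultimately show ?thesis by simp
  qed
  then show ?thesis unfolding Ir_def T3_def T_ideal_gen_def by auto
qed

lemma S_add: "x \<in> Sr \<Longrightarrow> y \<in> Sr \<Longrightarrow> x + y \<in> Sr"
  unfolding Sr_def S2_def T_space_gen_def T_space_def fa_subspace_def
  by (auto simp: Rep_plus)

lemma S_sc: "x \<in> Sr \<Longrightarrow> sc c x \<in> Sr"
  unfolding Sr_def S2_def T_space_gen_def T_space_def fa_subspace_def
  by (auto simp: Rep_sc)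

lemma I_add: "x \<in> Ir \<Longrightarrow> y \<in> Ir \<Longrightarrow> x + y \<in> Ir"
  unfolding Ir_def T3_def T_ideal_gen_def T_ideal_def T_space_def fa_subspace_def
  by (auto simp: Rep_plus)

lemma I_sc: "x \<in> Ir \<Longrightarrow> sc c x \<in> Ir"
  unfolding Ir_def T3_def T_ideal_gen_def T_ideal_def T_space_def fa_subspace_def
  by (auto simp: Rep_sc)

lemma I_multL: "x \<in> Ir \<Longrightarrow> y * x \<in> Ir"
  unfolding Ir_def T3_def T_ideal_gen_def T_ideal_def
  using Rep_fr[of y] by (auto simp: Rep_times)

lemma I_multR: "x \<in> Ir \<Longrightarrow> x * y \<in> Ir"
  unfolding Ir_def T3_def T_ideal_gen_def T_ideal_def
  using Rep_fr[of y] by (auto simp: Rep_times)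

lemma I_neg: "x \<in> Ir \<Longrightarrow> - x \<in> Ir"
  using I_sc[of x "-1"] by (simp add: sc_minus1)

lemma I_diff: "x \<in> Ir \<Longrightarrow> y \<in> Ir \<Longrightarrow> x - y \<in> Ir"
  using I_add I_neg by (metis diff_conv_add_uminus)

lemma I_zero: "0 \<in> Ir"
  using I_comm3[of 0 0 0] by simp


definition cm :: "'k::field fr \<Rightarrow> 'k fr \<Rightarrow> 'k fr" where "cm a b = a * b - b * a"

lemma sc_diff: "sc c (a - b) = sc c a - sc c b"
  by transfer (simp add: fa_smul_def fa_sub_def right_diff_distrib)
lemma sc_uminus: "sc c (- a) = - sc c a"
  by transfer (simp add: fa_smul_def)
lemma sc_0: "sc c 0 = 0"
  by transfer (simp add: fa_smul_def fa_zero_def)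

lemma I_cen: "cm a b * c - c * cm a b \<in> Ir"
  using I_comm3 unfolding cm_def .

lemma I_cm3: "cm (cm a b) c \<in> Ir"
  using I_comm3 unfolding cm_def .

lemma four_ident: "cm a d * cm b c + cm a c * cm b d
   = cm (cm (a*b) c) d - a * cm (cm b c) d - cm (cm a c) d * b"
  by (simp add: cm_def algebra_simps)

lemma I_four: "cm a d * cm b c + cm a c * cm b d \<in> Ir"
  unfolding four_ident by (intro I_diff I_multL I_multR I_cm3)

lemma I_abs1: "cm y z * cm y t \<in> Ir"
proof -
  have "cm y z * cm t y + cm y y * cm t z \<in> Ir" by (rule I_four)
  then have "cm y z * cm t y \<in> Ir" by (simp add: cm_def)
  then have "- (cm y z * cm t y) \<in> Ir" by (rule I_neg)
  moreover have "- (cm y z * cm t y) = cm y z * cm y t" by (simp add: cm_def algebra_simps)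
  ultimately show ?thesis by simp
qed

lemma I_abs2: "cm y z * cm z t \<in> Ir"
proof -
  have "- (cm z y * cm z t) \<in> Ir" by (rule I_neg[OF I_abs1])
  moreover have "- (cm z y * cm z t) = cm y z * cm z t" by (simp add: cm_def algebra_simps)
  ultimately show ?thesis by simp
qed

definition Cen :: "'k::field fr set" where "Cen = {Z. \<forall>t. cm Z t \<in> Ir}"

definition Absb :: "'k::field fr \<Rightarrow> 'k fr \<Rightarrow> bool" where
  "Absb c g \<longleftrightarrow> (\<forall>t. c * cm g t \<in> Ir)"

lemma cm_mult_left: "cm (a * b) t = a * cm b t + cm a t * b"
  by (simp add: cm_def algebra_simps)

lemma Cen_cm: "cm a b \<in> Cen" unfolding Cen_def using I_cm3 by blast

lemma Cen_commute: "Z \<in> Cen \<Longrightarrow> Z * x - x * Z \<in> Ir"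
  unfolding Cen_def cm_def by blast

lemma Absb_mult: assumes "c \<in> Cen" "Absb c g1" "Absb c g2" shows "Absb c (g1 * g2)"
  unfolding Absb_def
proof
  fix t
  have "c * cm (g1 * g2) t = (c * g1 - g1 * c) * cm g2 t + g1 * (c * cm g2 t) + (c * cm g1 t) * g2"
    by (simp add: cm_mult_left algebra_simps)
  also have "\<dots> \<in> Ir"
    using assms unfolding Absb_def
    by (intro I_add[OF I_add[OF I_multR[OF Cen_commute] I_multL] I_multR]) auto
  finally show "c * cm (g1 * g2) t \<in> Ir" .
qed

lemma Absb_one: "Absb c 1"
  unfolding Absb_def cm_def using I_zero by simp

lemma Absb_pow: "c \<in> Cen \<Longrightarrow> Absb c g \<Longrightarrow> Absb c (g ^ n)"
  by (induction n) (simp_all add: Absb_one Absb_mult)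

lemma Cen_Absb: assumes "c \<in> Cen" "Absb c g" shows "c * g \<in> Cen"
  unfolding Cen_def mem_Collect_eq
proof
  fix t
  show "cm (c * g) t \<in> Ir" unfolding cm_mult_left
    using assms unfolding Absb_def Cen_def by (intro I_add[OF _ I_multR]) auto
qed

lemma Cen_mult: assumes "a \<in> Cen" "b \<in> Cen" shows "a * b \<in> Cen"
  unfolding Cen_def mem_Collect_eq
proof
  fix t
  show "cm (a * b) t \<in> Ir" unfolding cm_mult_left
    using assms unfolding Cen_def by (intro I_add[OF I_multL I_multR]) auto
qed

lemma Cen_one: "1 \<in> Cen" unfolding Cen_def cm_def using I_zero by simp

lemma Cen_prod_list: "\<forall>x\<in>set xs. x \<in> Cen \<Longrightarrow> prod_list xs \<in> Cen"
  by (induction xs) (simp_all add: Cen_one Cen_mult)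

definition kap :: "'k::field fr \<Rightarrow> 'k fr \<Rightarrow> 'k fr" where
  "kap a b = cm a b * (a ^ (CHAR('k) - 1) * b ^ (CHAR('k) - 1))"

lemma Cen_kap: "kap a b \<in> Cen"
proof -
  have A1: "Absb (cm a b) a" unfolding Absb_def using I_abs1 by blast
  have A2: "Absb (cm a b) b" unfolding Absb_def using I_abs2 by blast
  show ?thesis unfolding kap_def
    by (intro Cen_Absb Cen_cm Absb_mult Absb_pow A1 A2)
qed


definition SI :: "'k::field fr set" where "SI = {x. \<exists>s\<in>Sr. \<exists>t\<in>Ir. x = s + t}"

lemma SI_add: "x \<in> SI \<Longrightarrow> y \<in> SI \<Longrightarrow> x + y \<in> SI"
  unfolding SI_def
proof clarify
  fix s t s' t' :: "'a fr" assume "s \<in> Sr" "t \<in> Ir" "s' \<in> Sr" "t' \<in> Ir"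
  then show "\<exists>s''\<in>Sr. \<exists>t''\<in>Ir. s + t + (s' + t') = s'' + t''"
    by (intro bexI[of _ "s + s'"] bexI[of _ "t + t'"]) (auto simp: S_add I_add algebra_simps)
qed

lemma SI_sc: assumes "x \<in> SI" shows "sc c x \<in> SI"
proof -
  obtain s t where "s \<in> Sr" "t \<in> Ir" "x = s + t" using assms unfolding SI_def by blast
  then show ?thesis unfolding SI_def by (auto simp: sc_add intro!: S_sc I_sc)
qed

lemma SI_I: assumes "x \<in> SI" "y \<in> Ir" shows "x + y \<in> SI"
proof -
  obtain s t where "s \<in> Sr" "t \<in> Ir" "x = s + t" using assms unfolding SI_def by blast
  then show ?thesis unfolding SI_def using assms(2)
    by (intro CollectI bexI[of _ s] bexI[of _ "t + y"] I_add) (auto simp: add.assoc)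
qed

lemma SI_S: "x \<in> Sr \<Longrightarrow> x \<in> SI"
  unfolding SI_def using I_zero by force

lemma SI_zero: "0 \<in> SI"
  using SI_S[OF S_comm[of 0 0]] by simp

definition G :: "'k::field fr set" where "G = {D. \<forall>Z\<in>Cen. D * Z \<in> SI}"

lemma G_zero: "0 \<in> G" unfolding G_def using SI_zero by auto
lemma G_add: "x \<in> G \<Longrightarrow> y \<in> G \<Longrightarrow> x + y \<in> G"
  unfolding G_def by (simp add: distrib_right SI_add)
lemma G_sc: "x \<in> G \<Longrightarrow> sc c x \<in> G"
  unfolding G_def by (simp add: sc_mult_left SI_sc)
lemma G_multR: "x \<in> G \<Longrightarrow> y \<in> Cen \<Longrightarrow> x * y \<in> G"
  unfolding G_def by (simp add: mult.assoc Cen_mult)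
lemma G_multL: assumes "x \<in> G" "y \<in> Cen" shows "y * x \<in> G"
  unfolding G_def mem_Collect_eq
proof
  fix Z :: "'a fr" assume Z: "Z \<in> Cen"
  have "x * (Z * y) \<in> SI" using assms Z Cen_mult unfolding G_def by blast
  moreover have "y * (x * Z) - (x * Z) * y \<in> Ir" using Cen_commute[OF assms(2)] .
  ultimately have "x * (Z * y) + (y * (x * Z) - (x * Z) * y) \<in> SI" by (rule SI_I)
  then show "y * x * Z \<in> SI" by (simp add: algebra_simps)
qed
lemma G_SI: "x \<in> G \<Longrightarrow> x \<in> SI"
  unfolding G_def using Cen_one by force

lemma pow_cm: "cm (u ^ Suc n) v - sc (of_nat (Suc n)) (cm u v * u ^ n) \<in> Ir"
proof (induction n)
  case 0
  then show ?case using I_zero by (simp add: sc_one)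
next
  case (Suc n)
  let ?E = "cm (u ^ Suc n) v - sc (of_nat (Suc n)) (cm u v * u ^ n)"
  let ?k = "of_nat (Suc n) :: 'a"
  let ?w = "u ^ Suc n"
  have h1: "sc (of_nat (Suc (Suc n))) X = X + sc ?k X" for X
    by (simp only: of_nat_Suc[of "Suc n"] sc_add2 sc_one)
  have h2: "cm (u ^ Suc (Suc n)) v = u * cm ?w v + cm u v * ?w"
    by (simp only: power_Suc[of u "Suc n"] cm_mult_left)
  have h3: "u * ?E = u * cm ?w v - sc ?k (u * cm u v * u ^ n)"
    by (simp only: right_diff_distrib sc_mult_right mult.assoc)
  have h4: "sc ?k ((u * cm u v - cm u v * u) * u ^ n) = sc ?k (u * cm u v * u ^ n) - sc ?k (cm u v * ?w)"
    by (simp add: left_diff_distrib sc_diff mult.assoc)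
  have eq: "cm (u ^ Suc (Suc n)) v - sc (of_nat (Suc (Suc n))) (cm u v * u ^ Suc n)
     = u * ?E + sc (of_nat (Suc n)) ((u * cm u v - cm u v * u) * u ^ n)"
    unfolding h1 h2 h3 h4 by (simp add: algebra_simps)
  have a: "u * cm u v - cm u v * u \<in> Ir"
    using I_neg[OF I_cen[of u v u]] by (simp add: algebra_simps)
  have b: "u * ?E \<in> Ir" using Suc.IH by (rule I_multL)
  have c: "sc ?k ((u * cm u v - cm u v * u) * u ^ n) \<in> Ir" using a by (intro I_sc I_multR)
  from I_add[OF b c] show ?case by (simp only: eq)
qed


lemma cm_swap: "cm b a = - cm a b" by (simp add: cm_def)

lemma pow_cm2: "cm u (v ^ Suc n) - sc (of_nat (Suc n)) (cm u v * v ^ n) \<in> Ir"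
proof -
  have "- (cm (v ^ Suc n) u - sc (of_nat (Suc n)) (cm v u * v ^ n)) \<in> Ir"
    by (rule I_neg[OF pow_cm])
  moreover have "- (cm (v ^ Suc n) u - sc (of_nat (Suc n)) (cm v u * v ^ n))
      = cm u (v ^ Suc n) - sc (of_nat (Suc n)) (cm u v * v ^ n)"
    by (simp only: cm_swap[of v u] cm_swap[of "v ^ Suc n" u] minus_mult_left sc_uminus) (simp add: sc_uminus)
  ultimately show ?thesis by simp
qed

lemma char_nz: assumes "prime CHAR('k::field)" "i < CHAR('k) - 1"
  shows "(of_nat (Suc i) :: 'k) \<noteq> 0"
proof
  assume "(of_nat (Suc i) :: 'k) = 0"
  then have "CHAR('k) dvd Suc i" by (simp only: of_nat_eq_0_iff_char_dvd)
  then have "CHAR('k) \<le> Suc i" by (rule dvd_imp_le) simp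
  with assms(2) show False by simp
qed

lemma sc_inv: "k \<noteq> 0 \<Longrightarrow> sc (inverse k) (sc k T) = T"
  by (simp add: sc_sc sc_one)

lemma from_R: assumes "k \<noteq> 0" "Xs \<in> Sr" "Xs - sc k T \<in> Ir" shows "T \<in> SI"
proof -
  have "T = sc (inverse k) Xs + - sc (inverse k) (Xs - sc k T)"
    using assms(1) by (simp add: sc_diff sc_inv)
  also have "\<dots> \<in> SI"
    by (intro SI_I SI_S S_sc I_neg I_sc assms)
  finally show ?thesis .
qed

lemma key1: fixes u v :: "'k::field fr"
  assumes "prime CHAR('k)" "i < CHAR('k) - 1" "Z \<in> Cen"
  shows "cm u v * (u ^ i * v ^ j) * Z \<in> SI"
proof -
  let ?k = "of_nat (Suc i) :: 'k"
  let ?A = "u ^ Suc i" and ?B = "v ^ j"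
  have B: "cm ?B v = 0" by (simp add: cm_def power_commutes)
  have eq: "cm (?A * ?B * Z) v - sc ?k (cm u v * (u ^ i * v ^ j) * Z)
      = ?A * ?B * cm Z v + (cm ?A v - sc ?k (cm u v * u ^ i)) * (?B * Z)"
  proof -
    have "cm (?A * ?B * Z) v = ?A * ?B * cm Z v + ?A * cm ?B v * Z + cm ?A v * ?B * Z"
      by (simp add: cm_def algebra_simps)
    then show ?thesis using B by (simp add: algebra_simps sc_mult_left)
  qed
  have "cm Z v \<in> Ir" using assms(3) unfolding Cen_def by blast
  then have "cm (?A * ?B * Z) v - sc ?k (cm u v * (u ^ i * v ^ j) * Z) \<in> Ir"
    unfolding eq by (intro I_add I_multL I_multR pow_cm)
  then show ?thesis
    by (rule from_R[OF char_nz[OF assms(1,2)] S_comm[unfolded cm_def[symmetric]]])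
qed

lemma key2: fixes u v :: "'k::field fr"
  assumes "prime CHAR('k)" "j < CHAR('k) - 1" "Z \<in> Cen"
  shows "cm u v * (u ^ i * v ^ j) * Z \<in> SI"
proof -
  let ?k = "of_nat (Suc j) :: 'k"
  let ?A = "u ^ i" and ?B = "v ^ Suc j"
  have A: "cm u ?A = 0" by (simp add: cm_def power_commutes)
  have eq: "cm u (?A * ?B * Z) - sc ?k (cm u v * (u ^ i * v ^ j) * Z)
      = ?A * (cm u ?B - sc ?k (cm u v * v ^ j)) * Z + ?A * ?B * cm u Z
        + sc ?k ((?A * cm u v - cm u v * ?A) * v ^ j * Z)"
  proof -
    have "cm u (?A * ?B * Z) = cm u ?A * ?B * Z + ?A * cm u ?B * Z + ?A * ?B * cm u Z"
      by (simp add: cm_def algebra_simps)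
    then show ?thesis using A by (simp add: algebra_simps sc_mult_left sc_mult_right sc_diff)
  qed
  have "cm Z u \<in> Ir" using assms(3) unfolding Cen_def by blast
  then have z: "cm u Z \<in> Ir" using I_neg cm_swap by metis
  have c: "?A * cm u v - cm u v * ?A \<in> Ir"
    using I_neg[OF Cen_commute[OF Cen_cm[of u v], of ?A]] by (simp add: algebra_simps)
  have "cm u (?A * ?B * Z) - sc ?k (cm u v * (u ^ i * v ^ j) * Z) \<in> Ir"
    unfolding eq
    by (rule I_add[OF I_add[OF I_multR[OF I_multL[OF pow_cm2]] I_multL[OF z]] I_sc[OF I_multR[OF I_multR[OF c]]]])
  then show ?thesis
    by (rule from_R[OF char_nz[OF assms(1,2)] S_comm[unfolded cm_def[symmetric]]])
qed

inductive_set span_lt :: "'k::field fr \<Rightarrow> nat \<Rightarrow> 'k fr set" for u n where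
  sp_pow: "i < n \<Longrightarrow> u ^ i \<in> span_lt u n"
| sp_zero: "0 \<in> span_lt u n"
| sp_add: "x \<in> span_lt u n \<Longrightarrow> y \<in> span_lt u n \<Longrightarrow> x + y \<in> span_lt u n"
| sp_sc: "x \<in> span_lt u n \<Longrightarrow> sc c x \<in> span_lt u n"

lemma span_mono: "x \<in> span_lt u n \<Longrightarrow> n \<le> m \<Longrightarrow> x \<in> span_lt u m"
  by (induction rule: span_lt.induct) (auto intro: span_lt.intros)

lemma span_mult: "x \<in> span_lt u n \<Longrightarrow> u * x \<in> span_lt u (Suc n)"
proof (induction rule: span_lt.induct)
  case (sp_pow i) then show ?case using span_lt.sp_pow[of "Suc i" "Suc n" u] by simp
next
  case sp_zero then show ?case by (simp add: span_lt.sp_zero)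
next
  case (sp_add x y) then show ?case by (simp add: distrib_left span_lt.sp_add)
next
  case (sp_sc x c) then show ?case by (simp add: sc_mult_right span_lt.sp_sc)
qed

lemma span_binom: "(u + const a) ^ n - u ^ n \<in> span_lt u n"
proof (induction n)
  case 0 then show ?case by (simp add: span_lt.sp_zero)
next
  case (Suc n)
  let ?L = "(u + const a) ^ n - u ^ n"
  have "(u + const a) ^ Suc n - u ^ Suc n = u * ?L + (sc a (u ^ n) + sc a ?L)"
    by (simp add: algebra_simps const_mult sc_add[symmetric])
  also have "\<dots> \<in> span_lt u (Suc n)"
    by (intro span_lt.sp_add span_mult Suc span_lt.sp_sc span_lt.sp_pow span_mono[OF Suc]) auto
  finally show ?case .
qed

lemma span_binom2: "(u + const a) ^ n \<in> span_lt u (Suc n)"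
proof -
  have "(u + const a) ^ n = u ^ n + ((u + const a) ^ n - u ^ n)" by simp
  also have "\<dots> \<in> span_lt u (Suc n)"
    by (intro span_lt.sp_add span_lt.sp_pow span_mono[OF span_binom]) auto
  finally show ?thesis .
qed


lemma goodA_in: fixes u v :: "'k::field fr"
  assumes "prime CHAR('k)" "i < CHAR('k) - 1" "F \<in> span_lt v N"
  shows "cm u v * (u ^ i * F) \<in> G"
  using assms(3)
proof (induction rule: span_lt.induct)
  case (sp_pow j) then show ?case unfolding G_def using key1[OF assms(1,2)] by blast
next
  case sp_zero then show ?case by (simp add: G_zero)
next
  case (sp_add x y) then show ?case by (simp add: distrib_left G_add)
next
  case (sp_sc x c) then show ?case by (simp add: sc_mult_right G_sc)
qed

lemma goodA: fixes u v :: "'k::field fr"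
  assumes "prime CHAR('k)" "E \<in> span_lt u (CHAR('k) - 1)" "F \<in> span_lt v N"
  shows "cm u v * (E * F) \<in> G"
  using assms(2)
proof (induction rule: span_lt.induct)
  case (sp_pow i) then show ?case using goodA_in[OF assms(1) _ assms(3)] by blast
next
  case sp_zero then show ?case by (simp add: G_zero)
next
  case (sp_add x y) then show ?case by (simp add: distrib_left distrib_right G_add)
next
  case (sp_sc x c) then show ?case by (simp add: sc_mult_right sc_mult_left G_sc)
qed

lemma goodB_in: fixes u v :: "'k::field fr"
  assumes "prime CHAR('k)" "j < CHAR('k) - 1" "E \<in> span_lt u N"
  shows "cm u v * (E * v ^ j) \<in> G"
  using assms(3)
proof (induction rule: span_lt.induct)
  case (sp_pow i) then show ?case unfolding G_def using key2[OF assms(1,2)] by blast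
next
  case sp_zero then show ?case by (simp add: G_zero)
next
  case (sp_add x y) then show ?case by (simp add: distrib_left distrib_right G_add)
next
  case (sp_sc x c) then show ?case by (simp add: sc_mult_right sc_mult_left G_sc)
qed

lemma goodB: fixes u v :: "'k::field fr"
  assumes "prime CHAR('k)" "E \<in> span_lt u N" "F \<in> span_lt v (CHAR('k) - 1)"
  shows "cm u v * (E * F) \<in> G"
  using assms(3)
proof (induction rule: span_lt.induct)
  case (sp_pow j) then show ?case using goodB_in[OF assms(1) _ assms(2)] by blast
next
  case sp_zero then show ?case by (simp add: G_zero)
next
  case (sp_add x y) then show ?case by (simp add: distrib_left G_add)
next
  case (sp_sc x c) then show ?case by (simp add: sc_mult_right G_sc)
qed

lemma sc_const_comm: "sc a (const b) = sc b (const a)"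
  by (simp add: const_def sc_sc mult.commute)

lemma cm_shift: "cm (u + const a) (v + const b) = cm u v"
  by (simp add: cm_def algebra_simps const_mult mult_const sc_const_comm sc_add)

lemma kap_diff: fixes u v :: "'k::field fr"
  assumes "prime CHAR('k)"
  shows "kap (u + const a) (v + const b) - kap u v \<in> G"
proof -
  let ?q = "CHAR('k) - 1"
  let ?a = "u + const a" and ?b = "v + const b"
  have "kap ?a ?b - kap u v = cm u v * ((?a ^ ?q - u ^ ?q) * ?b ^ ?q) + cm u v * (u ^ ?q * (?b ^ ?q - v ^ ?q))"
    unfolding kap_def cm_shift by (simp add: algebra_simps)
  also have "\<dots> \<in> G"
    by (rule G_add[OF goodA[OF assms span_binom span_binom2] goodB[OF assms span_lt.sp_pow[OF lessI] span_binom]])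
  finally show ?thesis .
qed

lemma telescope:
  assumes "\<forall>r\<in>set rs. f r \<in> Cen \<and> g r \<in> Cen \<and> f r - g r \<in> G"
  shows "prod_list (map f rs) - prod_list (map g rs) \<in> G"
  using assms
proof (induction rs)
  case Nil then show ?case by (simp add: G_zero)
next
  case (Cons r rs)
  have P: "prod_list (map f rs) \<in> Cen" using Cons.prems by (intro Cen_prod_list) auto
  have "prod_list (map f (r # rs)) - prod_list (map g (r # rs))
      = (f r - g r) * prod_list (map f rs) + g r * (prod_list (map f rs) - prod_list (map g rs))"
    by (simp add: algebra_simps)
  also have "\<dots> \<in> G" using Cons P by (intro G_add G_multR G_multL) auto
  finally show ?case .
qed

definition W :: "nat \<Rightarrow> (nat \<Rightarrow> 'k::field fr) \<Rightarrow> 'k fr" where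
  "W m y = prod_list (map (\<lambda>r. kap (y (2*r - 1)) (y (2*r))) [1..<m+1])"

lemma Rep_kap: "Rep_fr (kap a b) = kappa (Rep_fr a) (Rep_fr b)"
  by (simp add: kap_def kappa_def Rep_times Rep_power fa_comm_Rep cm_def)

lemma w_gen_Rep: "w_gen m (\<lambda>j. Rep_fr (y j)) = Rep_fr (W m y)"
  by (simp add: w_gen_def W_def Rep_prod_list Rep_kap comp_def)

theorem main_fr: fixes \<alpha> :: "nat \<Rightarrow> 'k::field"
  assumes "prime CHAR('k)"
  shows "W m (\<lambda>j. X j + const (\<alpha> j)) - W m X \<in> SI"
  unfolding W_def
  by (intro G_SI telescope ballI conjI Cen_kap kap_diff assms)


theorem lemma3p1:
  fixes \<alpha> :: "nat \<Rightarrow> 'k::field" and m :: nat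
  assumes "prime CHAR('k)" and "CHAR('k) > 2" and "m \<ge> 1"
  shows "fa_sub (w_gen m (\<lambda>j. fa_add (fa_var j) (fa_smul (\<alpha> j) fa_one))) (w_gen m fa_var)
           \<in> set_sum S2 T3"
proof -
  have 1: "(\<lambda>j. fa_add (fa_var j) (fa_smul (\<alpha> j) fa_one)) = (\<lambda>j. Rep_fr (X j + const (\<alpha> j)))"
    by (simp add: Rep_plus var_X const_def Rep_sc Rep_one)
  have 2: "fa_var = (\<lambda>j. Rep_fr (X j :: 'k fr))"
    by (rule ext) (rule var_X)
  have "W m (\<lambda>j. X j + const (\<alpha> j)) - W m X \<in> SI" by (rule main_fr[OF assms(1)])
  then obtain s t where st: "s \<in> Sr" "t \<in> Ir" "W m (\<lambda>j. X j + const (\<alpha> j)) - W m X = s + t"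
    unfolding SI_def by blast
  have "fa_sub (w_gen m (\<lambda>j. fa_add (fa_var j) (fa_smul (\<alpha> j) fa_one))) (w_gen m fa_var)
      = Rep_fr (W m (\<lambda>j. X j + const (\<alpha> j)) - W m X)"
  proof -
    have a: "w_gen m (\<lambda>j. fa_add (fa_var j) (fa_smul (\<alpha> j) fa_one)) = Rep_fr (W m (\<lambda>j. X j + const (\<alpha> j)))"
      by (simp only: 1 w_gen_Rep)
    have b: "w_gen m (fa_var :: nat \<Rightarrow> 'k fa) = Rep_fr (W m (X :: nat \<Rightarrow> 'k fr))"
      by (subst 2) (rule w_gen_Rep)
    show ?thesis by (simp only: a b Rep_minus)
  qed
  also have "\<dots> = fa_add (Rep_fr s) (Rep_fr t)" by (simp add: st Rep_plus)
  also have "\<dots> \<in> set_sum S2 T3" using st unfolding set_sum_def Sr_def Ir_def by blast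
  finally show ?thesis .
qed

end
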